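(* Let $n,m\ge1$ and $p_{n,m}$ stable of degree $n$ in $z$ and $m$ in $w$. For every fixed $z\in\mathbb{T}$ and every $\eta\in\mathbb{C}$, $$\int_{\mathbb{T}}|L(z,w;\eta)|^2\,\frac{|dw|}{2\pi|p_{n,m}(z,w)|^2}=\bar z^n L(z,\eta;\eta),$$ and consequently, for $0\le i,j\le m-1$, $$\int_{\mathbb{T}}\overline{a_i(z,w)}\,a_j(z,w)\,\frac{|dw|}{2\pi|p_{n,m}(z,w)|^2}=T_{i,j}(z).$$
   Context: $p_{n,m}$ is stable if it has no zeros in $\{|z|\le1,|w|\le1\}$. Write $p_{n,m}(z,w)=\sum_{i=0}^m p_i(z)w^i$, $\bar p_i(z)=\overline{p_i(\bar z)}$, and $\tilde p_{n,m}(z,w)=z^nw^m\overline{p_{n,m}(1/\bar z,1/\bar w)}$. $L(z,w;\eta)=z^n\frac{p_{n,m}(z,w)\overline{p_{n,m}(1/\bar z,\eta)}-\tilde p_{n,m}(z,w)\overline{\tilde p_{n,m}(1/\bar z,\eta)}}{1-w\bar\eta}$, a polynomial in $z,w,\bar\eta$, and $a_j$ are defined by $L=\sum_{j=0}^{m-1}a_j(z,w)\bar\eta^j$. $T_m(z)$ is the $m\times m$ matrix (indices $0,\dots,m-1$) $T_m(z)=M_1M_2-M_3M_4$, where $M_1$ is lower triangular with $(r,s)$ entry $p_{r-s}(z)$ for $r\ge s$; $M_2$ upper triangular with $(r,s)$ entry $\bar p_{s-r}(1/z)$ for $s\ge r$; $M_3$ lower triangular with $(r,s)$ entry $\bar p_{m-r+s}(1/z)$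 for $r\ge s$; $M_4$ upper triangular with $(r,s)$ entry $p_{m-s+r}(z)$ for $s\ge r$. $T_{i,j}$ is its $(i,j)$ entry. *)

theory Defs
  imports "HOL-Analysis.Analysis" "HOL-Computational_Algebra.Polynomial"
begin

text \<open>A bivariate polynomial p(z,w) = sum_i p_i(z) w^i is represented as a
  polynomial in w whose coefficients are polynomials in z.\<close>

definition pc :: "complex poly poly \<Rightarrow> nat \<Rightarrow> complex \<Rightarrow> complex" where
  "pc P i z = poly (coeff P i) z"

definition pbar :: "complex poly poly \<Rightarrow> nat \<Rightarrow> complex \<Rightarrow> complex" where
  "pbar P i z = cnj (poly (coeff P i) (cnj z))"

definition ev2 :: "complex poly poly \<Rightarrow> complex \<Rightarrow> complex \<Rightarrow> complex" where
  "ev2 P z w = (\<Sum>i\<le>degree P. pc P i z * w ^ i)"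

definition degz :: "complex poly poly \<Rightarrow> nat" where
  "degz P = (MAX i\<in>{..degree P}. degree (coeff P i))"

definition stable2 :: "complex poly poly \<Rightarrow> bool" where
  "stable2 P \<longleftrightarrow> (\<forall>z w. cmod z \<le> 1 \<longrightarrow> cmod w \<le> 1 \<longrightarrow> ev2 P z w \<noteq> 0)"

text \<open>Reflection z^n w^m conj(p(1/conj z, 1/conj w)), written out as the polynomial it is.\<close>
definition rev2 :: "complex poly poly \<Rightarrow> complex \<Rightarrow> complex \<Rightarrow> complex" where
  "rev2 P z w = (\<Sum>i\<le>degree P. \<Sum>k\<le>degz P.
      cnj (coeff (coeff P i) k) * z ^ (degz P - k) * w ^ (degree P - i))"

definition Lraw :: "complex poly poly \<Rightarrow> complex \<Rightarrow> complex \<Rightarrow> complex \<Rightarrow> complex" where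
  "Lraw P z w \<eta> = z ^ degz P *
     (ev2 P z w * cnj (ev2 P (1 / cnj z) \<eta>) - rev2 P z w * cnj (rev2 P (1 / cnj z) \<eta>))
     / (1 - w * cnj \<eta>)"

text \<open>L(z,w;eta): the quotient, continuously (polynomially) extended across w * conj eta = 1.\<close>
definition Lfun :: "complex poly poly \<Rightarrow> complex \<Rightarrow> complex \<Rightarrow> complex \<Rightarrow> complex" where
  "Lfun P z w \<eta> = (if w * cnj \<eta> \<noteq> 1 then Lraw P z w \<eta> else Lim (at w) (\<lambda>t. Lraw P z t \<eta>))"

definition acoef :: "complex poly poly \<Rightarrow> complex \<Rightarrow> complex \<Rightarrow> nat \<Rightarrow> complex" where
  "acoef P z w j = coeff (THE Q. \<forall>\<eta>. poly Q (cnj \<eta>) = Lfun P z w \<eta>) j"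

definition Tmat :: "complex poly poly \<Rightarrow> complex \<Rightarrow> nat \<Rightarrow> nat \<Rightarrow> complex" where
  "Tmat P z r s =
     (\<Sum>k<degree P. (if k \<le> r then pc P (r - k) z else 0) * (if k \<le> s then pbar P (s - k) (1 / z) else 0))
   - (\<Sum>k<degree P. (if k \<le> r then pbar P (degree P - r + k) (1 / z) else 0)
                    * (if k \<le> s then pc P (degree P - s + k) z else 0))"

end

theory Submission
  imports Defs "HOL-Computational_Algebra.Fundamental_Theorem_Algebra"
begin

lemma cis_pow_int: "((\<lambda>t. cis t ^ n) has_integral (if n = 0 then 2*pi else 0)) {0..2*pi}"
proof (cases "n = 0")
  case True
  then show ?thesis using has_integral_const_real[of "1::complex" 0 "2*pi"]
    by (simp add: scaleR_conv_of_real)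
next
  case False
  define f where "f t = cis (real n * t) / (\<i> * of_nat n)" for t
  have d: "(f has_vector_derivative cis t ^ n) (at t within {0..2*pi})" for t
  proof -
    have "((\<lambda>t. cis (real n * t)) has_derivative (\<lambda>h. (real n * h) *\<^sub>R (\<i> * cis (real n * t)))) (at t within {0..2*pi})"
      by (intro has_derivative_cis derivative_eq_intros) auto
    then have "((\<lambda>t. cis (real n * t)) has_vector_derivative (\<i> * of_nat n * cis (real n * t))) (at t within {0..2*pi})"
      unfolding has_vector_derivative_def
      by (simp add: scaleR_conv_of_real algebra_simps)
    then have "(f has_vector_derivative ((\<i> * of_nat n * cis (real n * t)) / (\<i> * of_nat n))) (at t within {0..2*pi})"
      unfolding f_def by (intro has_vector_derivative_divide)
    moreover have "\<i> * of_nat n * cis (real n * t) / (\<i> * of_nat n) = cis (real n * t)"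
      using False by (simp del: cis.ctr)
    moreover have "cis t ^ n = cis (real n * t)" by (rule Complex.DeMoivre)
    ultimately show ?thesis by simp
  qed
  have "(cis (real n * (2*pi))) = 1"
    using Complex.DeMoivre[of "2*pi" n] by simp  
  then have "f (2*pi) - f 0 = 0" by (simp add: f_def)
  with fundamental_theorem_of_calculus[of 0 "2*pi" f "\<lambda>t. cis t ^ n"] d False show ?thesis by simp
qed

lemma poly_cis_int: "((\<lambda>t. poly f (cis t)) has_integral (2*pi*poly f 0)) {0..2*pi}"
proof -
  have "((\<lambda>t. \<Sum>i\<le>degree f. coeff f i * cis t ^ i) has_integral
        (\<Sum>i\<le>degree f. coeff f i * (if i = 0 then 2*pi else 0))) {0..2*pi}"
    by (intro has_integral_sum finite_atMost has_integral_mult_right cis_pow_int)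
  moreover have "(\<Sum>i\<le>degree f. coeff f i * (if i = 0 then 2*pi else 0)) = 2*pi*poly f 0"
    by (simp add: poly_0_coeff_0 if_distrib sum.delta cong: if_cong)
  ultimately show ?thesis by (simp add: poly_altdef)
qed

lemma cont_quot:
  assumes "\<forall>w. cmod w \<le> 1 \<longrightarrow> poly Q w \<noteq> 0"
  shows "continuous_on {0..2*pi} (\<lambda>t. poly f (cis t) / poly Q (cis t))"
  using assms by (intro continuous_intros) auto

lemma aux_pt:
  fixes a b w \<alpha> :: complex
  assumes "b \<noteq> 0" "w - \<alpha> \<noteq> 0" "\<alpha> \<noteq> 0"
  shows "a / ((w - \<alpha>) * b) = (-1/\<alpha>) * (a / b) + (1/\<alpha>) * (w * a / ((w - \<alpha>) * b))"
  using assms by (simp add: field_simps)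

lemma aux_step:
  fixes a b \<alpha> J :: complex
  assumes "b \<noteq> 0" "\<alpha> \<noteq> 0"
  shows "(-1/\<alpha>) * (a / b) + (1/\<alpha>) * J = a / ((0 - \<alpha>) * b) + J / \<alpha>"
  using assms by (simp add: field_simps)

lemma mean_value_poly:
  fixes Q :: "complex poly"
  assumes "\<forall>w. cmod w \<le> 1 \<longrightarrow> poly Q w \<noteq> 0"
  shows "((\<lambda>t. poly f (cis t) / poly Q (cis t)) has_integral (2*pi*poly f 0 / poly Q 0)) {0..2*pi}"
  using assms
proof (induction "degree Q" arbitrary: Q f)
  case 0
  then obtain c where Qc: "Q = [:c:]" by (metis degree_eq_zeroE)
  with 0 have "c \<noteq> 0" by (metis poly_pCons mult_zero_left add.right_neutral norm_zero zero_le_one)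
  have "((\<lambda>t. inverse c * poly f (cis t)) has_integral (inverse c * (2*pi*poly f 0))) {0..2*pi}"
    by (intro has_integral_mult_right poly_cis_int)
  then show ?case using Qc by (simp add: field_simps)
next
  case (Suc k)
  have "\<not> constant (poly Q)" using Suc(2) constant_degree by (metis nat.distinct(1))
  then obtain \<alpha> where a0: "poly Q \<alpha> = 0" using fundamental_theorem_of_algebra by blast
  have a1: "cmod \<alpha> > 1" using Suc(3) a0 by force
  then have an0: "\<alpha> \<noteq> 0" by auto
  from a0 obtain Q1 where Q1: "Q = [:-\<alpha>,1:] * Q1" by (metis poly_eq_0_iff_dvd dvdE)
  have Q0: "Q \<noteq> 0" using Suc(2) by auto
  have "Q1 \<noteq> 0" using Q0 Q1 by auto
  then have "degree Q = degree [:-\<alpha>,1:] + degree Q1" unfolding Q1 by (intro degree_mult_eq) auto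
  then have dQ1: "k = degree Q1" using Suc(2) by simp
  have pQ: "poly Q w = (w - \<alpha>) * poly Q1 w" for w unfolding Q1 by (simp add: algebra_simps)
  have nz1: "\<forall>w. cmod w \<le> 1 \<longrightarrow> poly Q1 w \<noteq> 0" using Suc(3) pQ by force
  have IH: "((\<lambda>t. poly g (cis t) / poly Q1 (cis t)) has_integral (2*pi*poly g 0 / poly Q1 0)) {0..2*pi}" for g
    using Suc(1)[OF dQ1 nz1] .
  define I where "I g = integral {0..2*pi} (\<lambda>t. poly g (cis t) / poly Q (cis t))" for g
  have HI: "((\<lambda>t. poly g (cis t) / poly Q (cis t)) has_integral I g) {0..2*pi}" for g
    unfolding I_def by (intro integrable_integral integrable_continuous_interval cont_quot Suc(3))
  define c where "c g = of_real (2*pi) * poly g 0 / poly Q 0" for g :: "complex poly"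
  have step: "I g = c g + I (pCons 0 g) / \<alpha>" for g
  proof -
    have pt: "poly g (cis t) / poly Q (cis t) = (-1/\<alpha>) * (poly g (cis t) / poly Q1 (cis t)) + (1/\<alpha>) * (poly (pCons 0 g) (cis t) / poly Q (cis t))" for t
    proof -
      have "poly Q1 (cis t) \<noteq> 0" "cis t - \<alpha> \<noteq> 0" using nz1 a1 by auto
      from aux_pt[OF this an0, of "poly g (cis t)"] show ?thesis unfolding pQ by simp
    qed
    have "((\<lambda>t. (-1/\<alpha>) * (poly g (cis t) / poly Q1 (cis t)) + (1/\<alpha>) * (poly (pCons 0 g) (cis t) / poly Q (cis t)))
       has_integral ((-1/\<alpha>) * (2*pi*poly g 0 / poly Q1 0) + (1/\<alpha>) * I (pCons 0 g))) {0..2*pi}"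
      by (intro has_integral_add has_integral_mult_right IH HI)
    from has_integral_unique[OF HI[of g, unfolded pt] this]
    have "I g = (-1/\<alpha>) * (2*pi*poly g 0 / poly Q1 0) + (1/\<alpha>) * I (pCons 0 g)" .
    then show ?thesis unfolding c_def using an0 nz1 aux_step[of "poly Q1 0" \<alpha> "2*pi*poly g 0" "I (pCons 0 g)"]
      by (simp add: pQ)
  qed
  have iter: "I f = c f + I ((monom 1 (Suc N)) * f) / \<alpha>^(Suc N)" for N
  proof (induction N)
    case 0
    have "monom 1 (Suc 0) * f = pCons 0 f" by (simp add: monom_Suc)
    then show ?case using step[of f] by simp
  next
    case (Suc N)
    have "I (monom 1 (Suc N) * f) = c (monom 1 (Suc N) * f) + I (pCons 0 (monom 1 (Suc N) * f)) / \<alpha>" by (rule step)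
    moreover have "c (monom 1 (Suc N) * f) = 0" by (simp add: c_def poly_monom)
    moreover have "pCons 0 (monom 1 (Suc N) * f) = monom 1 (Suc (Suc N)) * f"
      by (simp add: monom_Suc)
    ultimately have "I (monom 1 (Suc N) * f) = I (monom 1 (Suc (Suc N)) * f) / \<alpha>" by simp
    then show ?case using Suc an0 by (simp add: divide_divide_eq_left)
  qed
  have "compact ((\<lambda>t. poly f (cis t) / poly Q (cis t)) ` {0..2*pi})"
    by (intro compact_continuous_image cont_quot Suc(3)) auto
  from compact_imp_bounded[OF this] obtain M where M0: "M > 0" and
     MM: "\<forall>x\<in>((\<lambda>t. poly f (cis t) / poly Q (cis t)) ` {0..2*pi}). norm x \<le> M"
    unfolding bounded_pos by blast
  have M: "M > 0" "\<And>t. t \<in> {0..2*pi} \<Longrightarrow> cmod (poly f (cis t) / poly Q (cis t)) \<le> M"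
    using M0 MM by auto
  have bnd: "cmod (I f - c f) \<le> (M * (2*pi)) * (1 / cmod \<alpha>)^(Suc N)" for N
  proof -
    have "cmod (I (monom 1 (Suc N) * f)) \<le> M * Henstock_Kurzweil_Integration.content {0..2*pi}"
    proof (rule has_integral_bound_real[OF _ _ HI])
      show "0 \<le> M" using M by simp
      show "finite {}" by simp
      fix t assume "t \<in> {0..2*pi} - {}"
      then show "cmod (poly (monom 1 (Suc N) * f) (cis t) / poly Q (cis t)) \<le> M"
        using M(2)[of t] by (simp add: poly_monom norm_mult norm_divide norm_power)
    qed
    then have "cmod (I (monom 1 (Suc N) * f)) \<le> M * (2*pi)" by simp
    moreover have "cmod (I f - c f) = cmod (I (monom 1 (Suc N) * f)) / cmod \<alpha> ^ (Suc N)"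
      using iter[of N] by (simp add: norm_divide norm_power norm_mult del: power_Suc)
    ultimately show ?thesis using an0 by (simp add: power_divide divide_right_mono del: power_Suc)
  qed
  have "(\<lambda>N. (M * (2*pi)) * (1 / cmod \<alpha>)^(Suc N)) \<longlonglongrightarrow> (M * (2*pi)) * 0"
    using a1 by (intro tendsto_mult tendsto_const LIMSEQ_Suc[where f="\<lambda>N. (1 / cmod \<alpha>)^N"] LIMSEQ_power_zero) (auto simp: divide_less_eq)
  then have "cmod (I f - c f) \<le> 0"
    using bnd by (intro LIMSEQ_le_const[of _ 0]) (auto simp: eventually_sequentially)
  then have "I f = c f" by simp
  then show ?case using HI[of f] c_def by simp
qed


definition EE :: "(nat \<Rightarrow> complex) \<Rightarrow> nat \<Rightarrow> nat \<Rightarrow> nat \<Rightarrow> complex" where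
  "EE q m r s = q r * cnj (q s) - cnj (q (m - r)) * q (m - s)"

definition TT :: "(nat \<Rightarrow> complex) \<Rightarrow> nat \<Rightarrow> nat \<Rightarrow> nat \<Rightarrow> complex" where
  "TT q m r s = (\<Sum>k\<le>min r s. EE q m (r - k) (s - k))"

lemma TT_rec: "0 < r \<Longrightarrow> 0 < s \<Longrightarrow> TT q m r s = EE q m r s + TT q m (r - 1) (s - 1)"
proof -
  assume "0 < r" "0 < s"
  then have mn: "min r s = Suc (min (r - 1) (s - 1))" by auto
  show ?thesis unfolding TT_def mn sum.atMost_Suc_shift by simp
qed

lemma TT_0: "r = 0 \<or> s = 0 \<Longrightarrow> TT q m r s = EE q m r s"
  unfolding TT_def by auto

lemma TT_left: assumes "s \<le> m" shows "TT q m m s = 0"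
proof -
  have "TT q m m s = (\<Sum>k\<le>s. q (m - k) * cnj (q (s - k))) - (\<Sum>k\<le>s. cnj (q k) * q (m - (s - k)))"
    unfolding TT_def EE_def using assms by (simp add: sum_subtractf min_absorb2)
  also have "(\<Sum>k\<le>s. cnj (q k) * q (m - (s - k))) = (\<Sum>k\<le>s. cnj (q (s - k)) * q (m - k))"
  proof -
    have "(\<Sum>k\<le>s. cnj (q k) * q (m - (s - k))) = (\<Sum>k\<in>{0..s}. cnj (q k) * q (m - (s - k)))"
      by (simp add: atLeast0AtMost)
    also have "\<dots> = (\<Sum>k\<in>{0..s}. cnj (q (s - k)) * q (m - (s - (s - k))))"
      by (subst sum.atLeastAtMost_rev) simp
    also have "\<dots> = (\<Sum>k\<le>s. cnj (q (s - k)) * q (m - k))"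
      by (simp add: atLeast0AtMost)
    finally show ?thesis .
  qed
  finally show ?thesis by (simp add: mult.commute)
qed

lemma TT_right: assumes "r \<le> m" shows "TT q m r m = 0"
proof -
  have "TT q m r m = (\<Sum>k\<le>r. q (r - k) * cnj (q (m - k))) - (\<Sum>k\<le>r. cnj (q (m - (r - k))) * q k)"
    unfolding TT_def EE_def using assms by (simp add: sum_subtractf min_absorb1)
  also have "(\<Sum>k\<le>r. cnj (q (m - (r - k))) * q k) = (\<Sum>k\<le>r. cnj (q (m - k)) * q (r - k))"
  proof -
    have "(\<Sum>k\<le>r. cnj (q (m - (r - k))) * q k) = (\<Sum>k\<in>{0..r}. cnj (q (m - (r - k))) * q k)"
      by (simp add: atLeast0AtMost)
    also have "\<dots> = (\<Sum>k\<in>{0..r}. cnj (q (m - (r - (r - k)))) * q (r - k))"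
      by (subst sum.atLeastAtMost_rev) simp
    also have "\<dots> = (\<Sum>k\<le>r. cnj (q (m - k)) * q (r - k))"
      by (simp add: atLeast0AtMost)
    finally show ?thesis .
  qed
  finally show ?thesis by (simp add: mult.commute)
qed

lemma EE_TT: "EE q m r s = TT q m r s - (if r = 0 \<or> s = 0 then 0 else TT q m (r - 1) (s - 1))"
  using TT_rec[of r s q m] TT_0[of r s q m] by auto

lemma AI:
  "(1 - w * y) * (\<Sum>r<m. \<Sum>s<m. TT q m r s * w ^ r * y ^ s) =
    (\<Sum>r\<le>m. q r * w ^ r) * (\<Sum>s\<le>m. cnj (q s) * y ^ s)
  - (\<Sum>r\<le>m. cnj (q (m - r)) * w ^ r) * (\<Sum>s\<le>m. q (m - s) * y ^ s)"
proof -
  define S where "S = (\<Sum>r<m. \<Sum>s<m. TT q m r s * w ^ r * y ^ s)"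
  have R: "(\<Sum>r\<le>m. q r * w ^ r) * (\<Sum>s\<le>m. cnj (q s) * y ^ s)
  - (\<Sum>r\<le>m. cnj (q (m - r)) * w ^ r) * (\<Sum>s\<le>m. q (m - s) * y ^ s)
   = (\<Sum>r\<le>m. \<Sum>s\<le>m. EE q m r s * w ^ r * y ^ s)"
    unfolding sum_product EE_def by (simp add: sum_subtractf[symmetric] algebra_simps)
  have A: "(\<Sum>r\<le>m. \<Sum>s\<le>m. TT q m r s * w ^ r * y ^ s) = S"
    unfolding S_def lessThan_Suc_atMost[symmetric] sum.lessThan_Suc
    by (simp add: TT_left TT_right cong: sum.cong_simp)
  have B: "(\<Sum>r\<le>m. \<Sum>s\<le>m. (if r = 0 \<or> s = 0 then 0 else TT q m (r - 1) (s - 1)) * w ^ r * y ^ s) = w * y * S"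
    unfolding S_def lessThan_Suc_atMost[symmetric] sum.lessThan_Suc_shift
    by (simp add: sum_distrib_left algebra_simps)
  have "(\<Sum>r\<le>m. \<Sum>s\<le>m. EE q m r s * w ^ r * y ^ s) = 
     (\<Sum>r\<le>m. \<Sum>s\<le>m. TT q m r s * w ^ r * y ^ s) -
     (\<Sum>r\<le>m. \<Sum>s\<le>m. (if r = 0 \<or> s = 0 then 0 else TT q m (r - 1) (s - 1)) * w ^ r * y ^ s)"
    unfolding EE_TT by (simp add: sum_subtractf[symmetric] algebra_simps)
  then show ?thesis using R A B unfolding S_def by (simp add: algebra_simps)
qed


definition Wt :: "complex poly \<Rightarrow> real \<Rightarrow> complex" where
  "Wt Qp t = complex_of_real (2*pi*(cmod (poly Qp (cis t)))^2)"

definition gi :: "complex poly \<Rightarrow> nat \<Rightarrow> nat \<Rightarrow> real \<Rightarrow> complex" where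
  "gi Qp j r t = cis t ^ j * cnj (cis t) ^ r / Wt Qp t"

definition GG :: "complex poly \<Rightarrow> nat \<Rightarrow> nat \<Rightarrow> complex" where
  "GG Qp j r = integral {0..2*pi} (gi Qp j r)"

lemma aux_w: "(b::complex) \<noteq> 0 \<Longrightarrow> a * b / (2*pi*(b * cnj b)) = (1/(2*pi)) * (a / cnj b)"
  by (simp add: field_simps)

lemma cis_cnj_mult: "cis t * cnj (cis t) = 1"
  by (simp add: cis_cnj cis_mult)

definition DD where "DD q Qp m j s = (\<Sum>r\<le>m. GG Qp j r * cnj (TT q m r s))"

definition SS where "SS q m w y = (\<Sum>r<m. \<Sum>s<m. TT q m r s * w ^ r * y ^ s)"

context
  fixes q :: "nat \<Rightarrow> complex" and Qp :: "complex poly" and m :: nat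
  assumes Qq: "\<And>w. poly Qp w = (\<Sum>i\<le>m. q i * w ^ i)"
    and nz: "\<forall>w. cmod w \<le> 1 \<longrightarrow> poly Qp w \<noteq> 0"
    and m1: "m \<ge> 1"
begin

lemma q0: "q 0 = poly Qp 0"
  using Qq[of 0] by (simp add: zero_power)

lemma q0nz: "q 0 \<noteq> 0" using q0 nz by simp

lemma Qnz_cis: "poly Qp (cis t) \<noteq> 0" using nz by simp

lemma Wt_eq: "Wt Qp t = 2 * pi * (poly Qp (cis t) * cnj (poly Qp (cis t)))"
  unfolding Wt_def by (simp add: complex_norm_square[symmetric])

lemma Wt_nz: "Wt Qp t \<noteq> 0" unfolding Wt_eq using Qnz_cis by simp

lemma gi_int: "gi Qp j r integrable_on {0..2*pi}"
  unfolding gi_def Wt_def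
  by (intro integrable_continuous_interval continuous_intros) (use Qnz_cis in auto)

lemma integral_combo:
  "integral {0..2*pi} (\<lambda>t. \<Sum>r\<in>A. c r * gi Qp j (f r) t) = (\<Sum>r\<in>A. c r * GG Qp j (f r))"
proof (cases "finite A")
  case True
  then show ?thesis unfolding GG_def
    by (subst integral_sum) (auto intro: integrable_on_mult_right gi_int)
qed simp

lemma mv: "((\<lambda>t. poly f (cis t) / poly Qp (cis t)) has_integral (2*pi*poly f 0 / poly Qp 0)) {0..2*pi}"
  by (rule mean_value_poly[OF nz])

lemma M1: "(\<Sum>r\<le>m. cnj (q r) * GG Qp j r) = (if j = 0 then 1 / q 0 else 0)"
proof -
  have pt: "(\<Sum>r\<le>m. cnj (q r) * gi Qp j r t) = (1/(2*pi)) * (poly (monom (1::complex) j) (cis t) / poly Qp (cis t))" for t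
  proof -
    have "(\<Sum>r\<le>m. cnj (q r) * gi Qp j r t) = cis t ^ j * (\<Sum>r\<le>m. cnj (q r * cis t ^ r)) / Wt Qp t"
      unfolding gi_def by (simp add: sum_distrib_left sum_divide_distrib algebra_simps)
    also have "(\<Sum>r\<le>m. cnj (q r * cis t ^ r)) = cnj (poly Qp (cis t))"
      unfolding Qq by simp
    finally show ?thesis using Qnz_cis[of t] unfolding Wt_eq by (simp add: poly_monom field_simps)
  qed
  have "((\<lambda>t. (1/(2*pi)) * (poly (monom (1::complex) j) (cis t) / poly Qp (cis t))) has_integral
        (1/(2*pi)) * (2*pi*poly (monom (1::complex) j) 0 / poly Qp 0)) {0..2*pi}"
    by (intro has_integral_mult_right mv)
  then have "integral {0..2*pi} (\<lambda>t. \<Sum>r\<le>m. cnj (q r) * gi Qp j r t) = (1/(2*pi)) * (2*pi*poly (monom (1::complex) j) 0 / poly Qp 0)"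
    unfolding pt by (rule integral_unique)
  then show ?thesis unfolding integral_combo[where c="\<lambda>r. cnj (q r)" and A="{..m}" and f="\<lambda>r. r"]
    by (simp add: poly_monom q0)
qed


lemma cnj_pow_split: "r \<le> m \<Longrightarrow> cnj (cis t) ^ r = cnj (cis t) ^ m * cis t ^ (m - r)"
proof -
  assume "r \<le> m"
  then have "cnj (cis t) ^ m = cnj (cis t) ^ r * cnj (cis t) ^ (m - r)"
    by (simp add: power_add[symmetric])
  then have "cnj (cis t) ^ m * cis t ^ (m - r) = cnj (cis t) ^ r * (cnj (cis t) * cis t) ^ (m - r)"
    by (simp add: power_mult_distrib)
  also have "cnj (cis t) * cis t = 1" using cis_cnj_mult[of t] by (simp add: mult.commute)
  finally show ?thesis by simp
qed

lemma M2: assumes "j < m" shows "(\<Sum>r\<le>m. q (m - r) * GG Qp j r) = 0"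
proof -
  have pt: "(\<Sum>r\<le>m. q (m - r) * gi Qp j r t) = (1/(2*pi)) * cnj (poly (monom (1::complex) (m - j)) (cis t) / poly Qp (cis t))" for t
  proof -
    have "(\<Sum>r\<le>m. q (m - r) * gi Qp j r t) = (\<Sum>r\<le>m. (cis t ^ j * cnj (cis t) ^ m / Wt Qp t) * (q (m - r) * cis t ^ (m - r)))"
    proof (rule sum.cong[OF refl])
      fix r assume "r \<in> {..m}"
      then have "cnj (cis t) ^ r = cnj (cis t) ^ m * cis t ^ (m - r)" by (intro cnj_pow_split) auto
      then show "q (m - r) * gi Qp j r t = (cis t ^ j * cnj (cis t) ^ m / Wt Qp t) * (q (m - r) * cis t ^ (m - r))"
        unfolding gi_def by (simp add: mult_ac)
    qed
    also have "\<dots> = cis t ^ j * cnj (cis t) ^ m * (\<Sum>r\<le>m. q (m - r) * cis t ^ (m - r)) / Wt Qp t"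
      by (simp add: sum_distrib_left[symmetric] sum_divide_distrib[symmetric])
    also have "(\<Sum>r\<le>m. q (m - r) * cis t ^ (m - r)) = poly Qp (cis t)"
    proof -
      have "(\<Sum>r\<le>m. q (m - r) * cis t ^ (m - r)) = (\<Sum>r\<in>{0..m}. q (m - r) * cis t ^ (m - r))"
        by (simp add: atLeast0AtMost)
      also have "\<dots> = (\<Sum>r\<in>{0..m}. q (m - (m - r)) * cis t ^ (m - (m - r)))"
        by (subst sum.atLeastAtMost_rev) simp
      also have "\<dots> = (\<Sum>r\<le>m. q r * cis t ^ r)"
        by (simp add: atLeast0AtMost)
      finally show ?thesis unfolding Qq .
    qed
    also have "cis t ^ j * cnj (cis t) ^ m = cnj (cis t) ^ (m - j)"
    proof -
      have "cnj (cis t) ^ m = cnj (cis t) ^ j * cnj (cis t) ^ (m - j)"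
        using assms by (simp add: power_add[symmetric])
      then have "cis t ^ j * cnj (cis t) ^ m = (cis t * cnj (cis t)) ^ j * cnj (cis t) ^ (m - j)"
        by (simp add: power_mult_distrib mult.assoc)
      then show ?thesis unfolding cis_cnj_mult by simp
    qed
    finally show ?thesis using aux_w[OF Qnz_cis[of t], of "cnj (cis t) ^ (m - j)"] unfolding Wt_eq by (simp add: poly_monom)
  qed
  have "((\<lambda>t. cnj (poly (monom (1::complex) (m - j)) (cis t) / poly Qp (cis t))) has_integral
        cnj (2*pi*poly (monom (1::complex) (m - j)) 0 / poly Qp 0)) {0..2*pi}"
    using has_integral_cnj[THEN iffD2, OF mv] by (simp add: o_def)
  then have "((\<lambda>t. (1/(2*pi)) * cnj (poly (monom (1::complex) (m - j)) (cis t) / poly Qp (cis t))) has_integral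
        (1/(2*pi)) * cnj (2*pi*poly (monom (1::complex) (m - j)) 0 / poly Qp 0)) {0..2*pi}"
    by (intro has_integral_mult_right)
  then have "integral {0..2*pi} (\<lambda>t. \<Sum>r\<le>m. q (m - r) * gi Qp j r t) = (1/(2*pi)) * cnj (2*pi*poly (monom (1::complex) (m - j)) 0 / poly Qp 0)"
    unfolding pt by (rule integral_unique)
  then show ?thesis unfolding integral_combo[where c="\<lambda>r. q (m - r)" and A="{..m}" and f="\<lambda>r. r"]
    using assms by (simp add: poly_monom)
qed

lemma M3: "GG Qp (Suc j) (Suc r) = GG Qp j r"
proof -
  have "gi Qp (Suc j) (Suc r) = gi Qp j r"
  proof
    fix t
    have "cis t ^ Suc j * cnj (cis t) ^ Suc r = (cis t ^ j * cnj (cis t) ^ r) * (cis t * cnj (cis t))"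
      by (simp add: algebra_simps)
    then show "gi Qp (Suc j) (Suc r) t = gi Qp j r t" unfolding gi_def cis_cnj_mult by simp
  qed
  then show ?thesis unfolding GG_def by simp
qed


lemma DD_0: "j < m \<Longrightarrow> DD q Qp m j 0 = (if j = 0 then 1 else 0)"
proof -
  assume j: "j < m"
  have "DD q Qp m j 0 = q 0 * (\<Sum>r\<le>m. cnj (q r) * GG Qp j r) - cnj (q m) * (\<Sum>r\<le>m. q (m - r) * GG Qp j r)"
  proof -
    have "DD q Qp m j 0 = (\<Sum>r\<le>m. q 0 * (cnj (q r) * GG Qp j r) - cnj (q m) * (q (m - r) * GG Qp j r))"
      unfolding DD_def by (rule sum.cong) (simp_all add: TT_0 EE_def algebra_simps)
    then show ?thesis by (simp only: sum_subtractf sum_distrib_left)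
  qed
  then show ?thesis using M1[of j] M2[OF j] q0nz by simp
qed

lemma DD_m: "DD q Qp m j m = 0"
  unfolding DD_def by (simp add: TT_right)

lemma DD_rec: assumes "1 \<le> j" "j < m" "1 \<le> s" "s \<le> m" shows "DD q Qp m j s = DD q Qp m (j - 1) (s - 1)"
proof -
  have T: "TT q m r s = EE q m r s + (if r = 0 then 0 else TT q m (r - 1) (s - 1))" for r
    using EE_TT[of q m r s] assms by simp
  have "DD q Qp m j s = (q s * (\<Sum>r\<le>m. cnj (q r) * GG Qp j r) - cnj (q (m - s)) * (\<Sum>r\<le>m. q (m - r) * GG Qp j r))
     + (\<Sum>r\<le>m. GG Qp j r * (if r = 0 then 0 else cnj (TT q m (r - 1) (s - 1))))"
  proof -
    have "DD q Qp m j s = (\<Sum>r\<le>m. (q s * (cnj (q r) * GG Qp j r) - cnj (q (m - s)) * (q (m - r) * GG Qp j r))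
     + GG Qp j r * (if r = 0 then 0 else cnj (TT q m (r - 1) (s - 1))))"
      unfolding DD_def by (rule sum.cong) (simp_all add: T EE_def algebra_simps)
    then show ?thesis by (simp only: sum.distrib sum_subtractf sum_distrib_left)
  qed
  also have "q s * (\<Sum>r\<le>m. cnj (q r) * GG Qp j r) - cnj (q (m - s)) * (\<Sum>r\<le>m. q (m - r) * GG Qp j r) = 0"
    using M1[of j] M2[OF assms(2)] assms by simp
  also have "(\<Sum>r\<le>m. GG Qp j r * (if r = 0 then 0 else cnj (TT q m (r - 1) (s - 1))))
      = (\<Sum>r<m. GG Qp j (Suc r) * cnj (TT q m r (s - 1)))"
    unfolding lessThan_Suc_atMost[symmetric] sum.lessThan_Suc_shift by simp
  also have "\<dots> = (\<Sum>r<m. GG Qp (j - 1) r * cnj (TT q m r (s - 1)))"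
    using M3[of "j - 1"] assms by simp
  also have "\<dots> = DD q Qp m (j - 1) (s - 1)"
    unfolding DD_def lessThan_Suc_atMost[symmetric] sum.lessThan_Suc using TT_left[of "s - 1" m q] assms by simp
  finally show ?thesis by simp
qed

lemma DD_low: "s \<le> j \<Longrightarrow> j < m \<Longrightarrow> DD q Qp m j s = (if j = s then 1 else 0)"
proof (induction s arbitrary: j)
  case 0 then show ?case using DD_0 by simp
next
  case (Suc s)
  then have "DD q Qp m j (Suc s) = DD q Qp m (j - 1) s" using DD_rec[of j "Suc s"] by simp
  also have "\<dots> = (if j - 1 = s then 1 else 0)" using Suc by simp
  finally show ?case using Suc by auto
qed

lemma DD_high: "s \<le> m \<Longrightarrow> j < s \<Longrightarrow> DD q Qp m j s = 0"
proof (induction "m - s" arbitrary: j s)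
  case 0 then show ?case using DD_m by simp
next
  case (Suc k)
  then have "DD q Qp m (Suc j) (Suc s) = DD q Qp m j s" using DD_rec[of "Suc j" "Suc s"] by simp
  moreover have "DD q Qp m (Suc j) (Suc s) = 0" using Suc by (intro Suc(1)) auto
  ultimately show ?case by simp
qed

lemma DD_delta: "j < m \<Longrightarrow> s \<le> m \<Longrightarrow> DD q Qp m j s = (if j = s then 1 else 0)"
  using DD_low DD_high by (cases "s \<le> j") auto

lemma DD_lt: "j < m \<Longrightarrow> s \<le> m \<Longrightarrow> (\<Sum>r<m. GG Qp j r * cnj (TT q m r s)) = (if j = s then 1 else 0)"
  using DD_delta[of j s] unfolding DD_def lessThan_Suc_atMost[symmetric] sum.lessThan_Suc
  by (simp add: TT_left)


lemma integral_combo2: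
  assumes "finite A" "finite B"
  shows "integral {0..2*pi} (\<lambda>t. \<Sum>r\<in>A. \<Sum>r'\<in>B. c r r' * gi Qp (f r r') (g r r') t)
       = (\<Sum>r\<in>A. \<Sum>r'\<in>B. c r r' * GG Qp (f r r') (g r r'))"
proof -
  have I: "(\<lambda>t. c r r' * gi Qp (f r r') (g r r') t) integrable_on {0..2*pi}" for r r'
    by (intro integrable_on_mult_right gi_int)
  have "integral {0..2*pi} (\<lambda>t. \<Sum>r\<in>A. \<Sum>r'\<in>B. c r r' * gi Qp (f r r') (g r r') t)
     = (\<Sum>r\<in>A. integral {0..2*pi} (\<lambda>t. \<Sum>r'\<in>B. c r r' * gi Qp (f r r') (g r r') t))"
    using assms I by (intro integral_sum integrable_sum) auto
  also have "\<dots> = (\<Sum>r\<in>A. \<Sum>r'\<in>B. integral {0..2*pi} (\<lambda>t. c r r' * gi Qp (f r r') (g r r') t))"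
    using assms I by (intro sum.cong refl integral_sum) auto
  also have "\<dots> = (\<Sum>r\<in>A. \<Sum>r'\<in>B. c r r' * GG Qp (f r r') (g r r'))"
    unfolding GG_def by (simp add: integral_mult_right)
  finally show ?thesis .
qed

lemma part2_gen:
  assumes "i < m" "j < m"
  shows "integral {0..2*pi} (\<lambda>t. cnj (\<Sum>r<m. TT q m r i * cis t ^ r) * (\<Sum>r<m. TT q m r j * cis t ^ r) / Wt Qp t)
     = TT q m i j"
proof -
  have pt: "cnj (\<Sum>r<m. TT q m r i * cis t ^ r) * (\<Sum>r<m. TT q m r j * cis t ^ r) / Wt Qp t
       = (\<Sum>r'<m. \<Sum>r<m. (TT q m r' j * cnj (TT q m r i)) * gi Qp r' r t)" for t
    unfolding gi_def cnj_sum sum_product sum_divide_distrib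
    by (subst sum.swap) (simp add: mult_ac)
  have "integral {0..2*pi} (\<lambda>t. cnj (\<Sum>r<m. TT q m r i * cis t ^ r) * (\<Sum>r<m. TT q m r j * cis t ^ r) / Wt Qp t)
      = (\<Sum>r'<m. \<Sum>r<m. (TT q m r' j * cnj (TT q m r i)) * GG Qp r' r)"
    unfolding pt by (rule integral_combo2[where f="\<lambda>a b. a" and g="\<lambda>a b. b", simplified]) auto
  also have "\<dots> = (\<Sum>r'<m. TT q m r' j * (\<Sum>r<m. GG Qp r' r * cnj (TT q m r i)))"
    by (simp add: sum_distrib_left mult_ac)
  also have "\<dots> = (\<Sum>r'<m. TT q m r' j * (if r' = i then 1 else 0))"
    using assms by (intro sum.cong refl) (simp add: DD_lt)
  also have "\<dots> = TT q m i j" using assms by (simp add: if_distrib cong: if_cong)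
  finally show ?thesis .
qed


lemma part1_gen:
  "integral {0..2*pi} (\<lambda>t. SS q m (cis t) y * cnj (SS q m (cis t) y) / Wt Qp t) = SS q m (cnj y) y"
proof -
  define a where "a r = (\<Sum>s<m. TT q m r s * y ^ s)" for r
  have Sa: "SS q m w y = (\<Sum>r<m. a r * w ^ r)" for w
    unfolding SS_def a_def by (simp add: sum_distrib_right sum_distrib_left mult_ac)
  have pt: "SS q m (cis t) y * cnj (SS q m (cis t) y) / Wt Qp t
       = (\<Sum>r<m. \<Sum>r'<m. (a r * cnj (a r')) * gi Qp r r' t)" for t
    unfolding Sa gi_def cnj_sum sum_product sum_divide_distrib
    by (simp add: mult_ac)
  have "integral {0..2*pi} (\<lambda>t. SS q m (cis t) y * cnj (SS q m (cis t) y) / Wt Qp t)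
      = (\<Sum>r<m. \<Sum>r'<m. (a r * cnj (a r')) * GG Qp r r')"
    unfolding pt by (rule integral_combo2[where f="\<lambda>a b. a" and g="\<lambda>a b. b", simplified]) auto
  also have "\<dots> = (\<Sum>r<m. a r * (\<Sum>r'<m. GG Qp r r' * cnj (a r')))"
    by (simp add: sum_distrib_left mult_ac)
  also have "\<dots> = (\<Sum>r<m. a r * cnj y ^ r)"
  proof (intro sum.cong refl arg_cong2[where f="(*)"])
    fix r assume r: "r \<in> {..<m}"
    have "(\<Sum>r'<m. GG Qp r r' * cnj (a r')) = (\<Sum>r'<m. \<Sum>s<m. GG Qp r r' * cnj (TT q m r' s) * cnj y ^ s)"
      unfolding a_def cnj_sum by (simp add: sum_distrib_left mult_ac)
    also have "\<dots> = (\<Sum>s<m. \<Sum>r'<m. GG Qp r r' * cnj (TT q m r' s) * cnj y ^ s)"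
      by (rule sum.swap)
    also have "\<dots> = (\<Sum>s<m. cnj y ^ s * (\<Sum>r'<m. GG Qp r r' * cnj (TT q m r' s)))"
      by (simp add: sum_distrib_left mult_ac)
    also have "\<dots> = (\<Sum>s<m. cnj y ^ s * (if r = s then 1 else 0))"
      using r by (intro sum.cong refl) (simp add: DD_lt)
    also have "\<dots> = cnj y ^ r" using r by (simp add: if_distrib cong: if_cong)
    finally show "(\<Sum>r'<m. GG Qp r r' * cnj (a r')) = cnj y ^ r" .
  qed
  also have "\<dots> = SS q m (cnj y) y" unfolding Sa ..
  finally show ?thesis .
qed

end

lemma poly_upto: fixes p :: "complex poly" assumes "degree p \<le> N" shows "poly p x = (\<Sum>k\<le>N. coeff p k * x ^ k)"
  unfolding poly_altdef
  by (rule sum.mono_neutral_left) (use assms in \<open>auto simp: coeff_eq_0\<close>)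

lemma deg_coeff_le: "i \<le> degree P \<Longrightarrow> degree (coeff P i) \<le> degz P"
  unfolding degz_def by (rule Max_ge) auto

lemma z_inv: "cmod z = 1 \<Longrightarrow> z * cnj z = 1"
  using complex_norm_square[of z] by simp

lemma z_inv2: "cmod z = 1 \<Longrightarrow> 1 / cnj z = z"
  using z_inv[of z] by (metis mult_cancel_left1 nonzero_mult_div_cancel_right one_neq_zero
     divide_self_if mult.commute)

lemma zpow_inv: "cmod z = 1 \<Longrightarrow> z ^ n * cnj z ^ n = 1"
  using z_inv[of z] by (metis power_mult_distrib power_one)

lemma rev2_eq:
  assumes "cmod z = 1"
  shows "rev2 P z w = z ^ degz P * (\<Sum>r\<le>degree P. cnj (pc P (degree P - r) z) * w ^ r)"
proof -
  let ?n = "degz P" and ?m = "degree P"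
  have inner: "(\<Sum>k\<le>?n. cnj (coeff (coeff P i) k) * z ^ (?n - k)) = z ^ ?n * cnj (pc P i z)"
    if i: "i \<le> ?m" for i
  proof -
    have "pc P i z = (\<Sum>k\<le>?n. coeff (coeff P i) k * z ^ k)"
      unfolding pc_def by (rule poly_upto[OF deg_coeff_le[OF i]])
    then have "z ^ ?n * cnj (pc P i z) = (\<Sum>k\<le>?n. cnj (coeff (coeff P i) k) * (z ^ ?n * cnj z ^ k))"
      by (simp add: sum_distrib_left mult_ac)
    also have "\<dots> = (\<Sum>k\<le>?n. cnj (coeff (coeff P i) k) * z ^ (?n - k))"
    proof (intro sum.cong refl arg_cong2[where f="(*)"])
      fix k assume "k \<in> {..?n}"
      then have "z ^ ?n = z ^ (?n - k) * z ^ k" by (simp add: power_add[symmetric])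
      then show "z ^ ?n * cnj z ^ k = z ^ (?n - k)"
        using zpow_inv[OF assms, of k] by (simp add: mult.assoc)
    qed
    finally show ?thesis by simp
  qed
  have "rev2 P z w = (\<Sum>i\<le>?m. (z ^ ?n * cnj (pc P i z)) * w ^ (?m - i))"
    unfolding rev2_def
    by (intro sum.cong refl) (simp add: inner[symmetric] sum_distrib_right)
  also have "\<dots> = (\<Sum>i\<in>{0..?m}. (z ^ ?n * cnj (pc P i z)) * w ^ (?m - i))"
    by (simp add: atLeast0AtMost)
  also have "\<dots> = (\<Sum>i\<in>{0..?m}. (z ^ ?n * cnj (pc P (?m - i) z)) * w ^ (?m - (?m - i)))"
    by (subst sum.atLeastAtMost_rev) simp
  also have "\<dots> = (\<Sum>r\<le>?m. (z ^ ?n * cnj (pc P (?m - r) z)) * w ^ r)"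
    by (simp add: atLeast0AtMost)
  finally show ?thesis by (simp add: sum_distrib_left mult_ac)
qed

lemma ev2_alt: "ev2 P z w = (\<Sum>i\<le>degree P. pc P i z * w ^ i)"
  unfolding ev2_def ..

lemma Lraw_eq:
  assumes z: "cmod z = 1" and ne: "w * cnj \<eta> \<noteq> 1"
  shows "Lraw P z w \<eta> = z ^ degz P * SS (\<lambda>i. pc P i z) (degree P) w (cnj \<eta>)"
proof -
  let ?q = "\<lambda>i. pc P i z" and ?m = "degree P" and ?n = "degz P"
  let ?R = "\<lambda>w. (\<Sum>r\<le>?m. cnj (?q (?m - r)) * w ^ r)"
  have zz: "1 / cnj z = z" by (rule z_inv2[OF z])
  have c1: "cnj (ev2 P z \<eta>) = (\<Sum>s\<le>?m. cnj (?q s) * cnj \<eta> ^ s)"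
    unfolding ev2_def by simp
  have c2: "cnj (?R \<eta>) = (\<Sum>s\<le>?m. ?q (?m - s) * cnj \<eta> ^ s)" by simp
  have "rev2 P z w * cnj (rev2 P z \<eta>) = (z ^ ?n * cnj z ^ ?n) * (?R w * cnj (?R \<eta>))"
    unfolding rev2_eq[OF z] by (simp add: mult_ac)
  also have "\<dots> = ?R w * cnj (?R \<eta>)" using zpow_inv[OF z] by simp
  finally have rr: "rev2 P z w * cnj (rev2 P z \<eta>) = ?R w * cnj (?R \<eta>)" .
  have AI': "(1 - w * cnj \<eta>) * SS ?q ?m w (cnj \<eta>) = ev2 P z w * cnj (ev2 P z \<eta>) - ?R w * cnj (?R \<eta>)"
    unfolding SS_def c1 c2 unfolding ev2_alt by (rule AI)
  have "1 - w * cnj \<eta> \<noteq> 0" using ne by simp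
  then have "SS ?q ?m w (cnj \<eta>) = (ev2 P z w * cnj (ev2 P z \<eta>) - ?R w * cnj (?R \<eta>)) / (1 - w * cnj \<eta>)"
    using AI' by (simp add: field_simps)
  then show ?thesis unfolding Lraw_def zz rr by simp
qed

lemma SS_cont: "((\<lambda>t. SS q m t y) \<longlongrightarrow> SS q m w y) (at w)"
proof -
  have "continuous_on UNIV (\<lambda>t. SS q m t y)" unfolding SS_def by (intro continuous_intros)
  then show ?thesis by (simp add: continuous_on_def)
qed

lemma Lfun_eq:
  assumes z: "cmod z = 1"
  shows "Lfun P z w \<eta> = z ^ degz P * SS (\<lambda>i. pc P i z) (degree P) w (cnj \<eta>)"
proof (cases "w * cnj \<eta> \<noteq> 1")
  case True then show ?thesis unfolding Lfun_def using Lraw_eq[OF z True] by simp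
next
  case False
  then have we: "w * cnj \<eta> = 1" by simp
  then have "cnj \<eta> \<noteq> 0" by auto
  have ev: "eventually (\<lambda>t. z ^ degz P * SS (\<lambda>i. pc P i z) (degree P) t (cnj \<eta>) = Lraw P z t \<eta>) (at w)"
    unfolding eventually_at_filter
  proof (intro always_eventually allI impI)
    fix t assume "t \<noteq> w"
    then have "t * cnj \<eta> \<noteq> 1" using we \<open>cnj \<eta> \<noteq> 0\<close> by (metis mult_right_cancel)
    then show "z ^ degz P * SS (\<lambda>i. pc P i z) (degree P) t (cnj \<eta>) = Lraw P z t \<eta>"
      using Lraw_eq[OF z] by simp
  qed
  have "((\<lambda>t. z ^ degz P * SS (\<lambda>i. pc P i z) (degree P) t (cnj \<eta>)) \<longlongrightarrow> z ^ degz P * SS (\<lambda>i. pc P i z) (degree P) w (cnj \<eta>)) (at w)"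
    by (intro tendsto_intros SS_cont)
  then have "((\<lambda>t. Lraw P z t \<eta>) \<longlongrightarrow> z ^ degz P * SS (\<lambda>i. pc P i z) (degree P) w (cnj \<eta>)) (at w)"
    by (rule Lim_transform_eventually[OF _ ev])
  then show ?thesis unfolding Lfun_def using False by (simp add: tendsto_Lim)
qed


lemma acoef_eq:
  assumes z: "cmod z = 1" and j: "j < degree P"
  shows "acoef P z w j = z ^ degz P * (\<Sum>r<degree P. TT (\<lambda>i. pc P i z) (degree P) r j * w ^ r)"
proof -
  let ?q = "\<lambda>i. pc P i z" and ?m = "degree P" and ?n = "degz P"
  define c where "c s = z ^ ?n * (\<Sum>r<?m. TT ?q ?m r s * w ^ r)" for s
  define A where "A = (\<Sum>s<?m. monom (c s) s)"
  have pA: "poly A y = z ^ ?n * SS ?q ?m w y" for y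
  proof -
    have "poly A y = (\<Sum>s<?m. \<Sum>r<?m. z ^ ?n * (TT ?q ?m r s * w ^ r * y ^ s))"
      unfolding A_def c_def by (simp add: poly_sum poly_monom sum_distrib_left sum_distrib_right mult_ac)
    also have "\<dots> = (\<Sum>r<?m. \<Sum>s<?m. z ^ ?n * (TT ?q ?m r s * w ^ r * y ^ s))"
      by (rule sum.swap)
    also have "\<dots> = z ^ ?n * SS ?q ?m w y"
      unfolding SS_def by (simp add: sum_distrib_left)
    finally show ?thesis .
  qed
  have PA: "\<forall>\<eta>. poly A (cnj \<eta>) = Lfun P z w \<eta>"
    using Lfun_eq[OF z] pA by simp
  have "(THE Q. \<forall>\<eta>. poly Q (cnj \<eta>) = Lfun P z w \<eta>) = A"
  proof (rule the_equality)
    show "\<forall>\<eta>. poly A (cnj \<eta>) = Lfun P z w \<eta>" by (rule PA)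
    fix Q assume Q: "\<forall>\<eta>. poly Q (cnj \<eta>) = Lfun P z w \<eta>"
    have "poly Q = poly A"
    proof
      fix y show "poly Q y = poly A y" using Q PA by (metis complex_cnj_cnj)
    qed
    then show "Q = A" by (simp add: poly_eq_poly_eq_iff)
  qed
  then have "acoef P z w j = coeff A j" unfolding acoef_def by simp
  also have "\<dots> = c j" unfolding A_def coeff_sum coeff_monom using j by simp
  finally show ?thesis unfolding c_def .
qed

lemma sum_if2:
  fixes m r s :: nat and a b :: "nat \<Rightarrow> complex"
  assumes "r < m" "s < m"
  shows "(\<Sum>k<m. (if k \<le> r then a k else 0) * (if k \<le> s then b k else 0)) = (\<Sum>k\<le>min r s. a k * b k)"
proof -
  have "(\<Sum>k<m. (if k \<le> r then a k else 0) * (if k \<le> s then b k else 0)) = (\<Sum>k<m. if k \<in> {..min r s} then a k * b k else 0)"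
    by (intro sum.cong refl) auto
  also have "\<dots> = (\<Sum>k\<in>{..<m} \<inter> {..min r s}. a k * b k)"
    by (rule sum.inter_restrict[symmetric]) simp
  also have "{..<m} \<inter> {..min r s} = {..min r s}" using assms by auto
  finally show ?thesis .
qed

lemma Tmat_eq:
  assumes z: "cmod z = 1" and r: "r < degree P" and s: "s < degree P"
  shows "Tmat P z r s = TT (\<lambda>i. pc P i z) (degree P) r s"
proof -
  let ?q = "\<lambda>i. pc P i z" and ?m = "degree P"
  have cz: "cnj (1 / z) = z" using z_inv2[OF z] by (metis complex_cnj_cnj complex_cnj_divide complex_cnj_one)
  have pb: "pbar P k (1 / z) = cnj (?q k)" for k unfolding pbar_def pc_def cz ..
  have "Tmat P z r s = (\<Sum>k\<le>min r s. ?q (r - k) * cnj (?q (s - k))) - (\<Sum>k\<le>min r s. cnj (?q (?m - r + k)) * ?q (?m - s + k))"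
    unfolding Tmat_def pb sum_if2[OF r s] ..
  also have "(\<Sum>k\<le>min r s. cnj (?q (?m - r + k)) * ?q (?m - s + k)) = (\<Sum>k\<le>min r s. cnj (?q (?m - (r - k))) * ?q (?m - (s - k)))"
    using r s by (intro sum.cong refl) auto
  finally show ?thesis unfolding TT_def EE_def by (simp add: sum_subtractf)
qed


theorem mainTheorem11:
  fixes P :: "complex poly poly" and n m :: nat
  assumes "n \<ge> 1" and "m \<ge> 1" and "degree P = m" and "degz P = n" and "stable2 P"
  shows "(\<forall>z \<eta>. cmod z = 1 \<longrightarrow>
            integral {0..2*pi} (\<lambda>t. of_real ((cmod (Lfun P z (cis t) \<eta>))\<^sup>2
                 / (2 * pi * (cmod (ev2 P z (cis t)))\<^sup>2)))
            = cnj z ^ n * Lfun P z \<eta> \<eta>)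
       \<and> (\<forall>z i j. cmod z = 1 \<longrightarrow> i < m \<longrightarrow> j < m \<longrightarrow>
            integral {0..2*pi} (\<lambda>t. cnj (acoef P z (cis t) i) * acoef P z (cis t) j
                 / of_real (2 * pi * (cmod (ev2 P z (cis t)))\<^sup>2))
            = Tmat P z i j)"
proof -
  note dP = assms(3) and dz = assms(4) and m1 = assms(2)
  have setupQ: "\<exists>Qp. (\<forall>w. poly Qp w = (\<Sum>i\<le>m. pc P i z * w ^ i)) \<and> (\<forall>w. cmod w \<le> 1 \<longrightarrow> poly Qp w \<noteq> 0)
       \<and> (\<forall>t. of_real (2 * pi * (cmod (ev2 P z (cis t)))\<^sup>2) = Wt Qp t)"
    if z: "cmod z = 1" for z
  proof (intro exI conjI allI impI)
    define Qp where "Qp = (\<Sum>i\<le>m. monom (pc P i z) i)"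
    show Qq: "poly Qp w = (\<Sum>i\<le>m. pc P i z * w ^ i)" for w
      unfolding Qp_def by (simp add: poly_sum poly_monom)
    have ev: "ev2 P z w = poly Qp w" for w unfolding ev2_def Qq dP ..
    show "poly Qp w \<noteq> 0" if "cmod w \<le> 1" for w
    proof -
      have "ev2 P z w \<noteq> 0" using assms(5) that z unfolding stable2_def by auto
      then show ?thesis using ev by simp
    qed
    show "of_real (2 * pi * (cmod (ev2 P z (cis t)))\<^sup>2) = Wt Qp t" for t
      unfolding Wt_def ev ..
  qed
  have part1: "integral {0..2*pi} (\<lambda>t. of_real ((cmod (Lfun P z (cis t) \<eta>))\<^sup>2
                 / (2 * pi * (cmod (ev2 P z (cis t)))\<^sup>2)))
            = cnj z ^ n * Lfun P z \<eta> \<eta>" if z: "cmod z = 1" for z \<eta>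
  proof -
    obtain Qp where Qq: "\<And>w. poly Qp w = (\<Sum>i\<le>m. pc P i z * w ^ i)"
      and nz: "\<forall>w. cmod w \<le> 1 \<longrightarrow> poly Qp w \<noteq> 0"
      and W: "\<And>t. of_real (2 * pi * (cmod (ev2 P z (cis t)))\<^sup>2) = Wt Qp t"
      using setupQ[OF z] by blast
    let ?q = "\<lambda>i. pc P i z"
    have L: "Lfun P z w \<eta> = z ^ n * SS ?q m w (cnj \<eta>)" for w
      using Lfun_eq[OF z, of P w \<eta>] dP dz by simp
    have zn: "cmod (z ^ n) = 1" using z by (simp add: norm_power)
    have "(\<lambda>t. of_real ((cmod (Lfun P z (cis t) \<eta>))\<^sup>2 / (2 * pi * (cmod (ev2 P z (cis t)))\<^sup>2)) :: complex)
        = (\<lambda>t. SS ?q m (cis t) (cnj \<eta>) * cnj (SS ?q m (cis t) (cnj \<eta>)) / Wt Qp t)"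
    proof
      fix t
      have "of_real ((cmod (Lfun P z (cis t) \<eta>))\<^sup>2 / (2 * pi * (cmod (ev2 P z (cis t)))\<^sup>2))
          = (of_real ((cmod (SS ?q m (cis t) (cnj \<eta>)))\<^sup>2) :: complex) / Wt Qp t"
        unfolding L W[symmetric] using zn by (simp add: norm_mult)
      then show "of_real ((cmod (Lfun P z (cis t) \<eta>))\<^sup>2 / (2 * pi * (cmod (ev2 P z (cis t)))\<^sup>2))
          = SS ?q m (cis t) (cnj \<eta>) * cnj (SS ?q m (cis t) (cnj \<eta>)) / Wt Qp t"
        using complex_norm_square[of "SS ?q m (cis t) (cnj \<eta>)"] by simp
    qed
    then have "integral {0..2*pi} (\<lambda>t. of_real ((cmod (Lfun P z (cis t) \<eta>))\<^sup>2 / (2 * pi * (cmod (ev2 P z (cis t)))\<^sup>2)))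
        = SS ?q m (cnj (cnj \<eta>)) (cnj \<eta>)"
      using part1_gen[OF Qq nz m1] by simp
    also have "\<dots> = cnj z ^ n * Lfun P z \<eta> \<eta>"
      unfolding L using zpow_inv[OF z, of n] by (simp add: mult.assoc[symmetric] mult.commute)
    finally show ?thesis .
  qed
  have part2: "integral {0..2*pi} (\<lambda>t. cnj (acoef P z (cis t) i) * acoef P z (cis t) j
                 / of_real (2 * pi * (cmod (ev2 P z (cis t)))\<^sup>2))
            = Tmat P z i j" if z: "cmod z = 1" and i: "i < m" and j: "j < m" for z i j
  proof -
    obtain Qp where Qq: "\<And>w. poly Qp w = (\<Sum>i\<le>m. pc P i z * w ^ i)"
      and nz: "\<forall>w. cmod w \<le> 1 \<longrightarrow> poly Qp w \<noteq> 0"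
      and W: "\<And>t. of_real (2 * pi * (cmod (ev2 P z (cis t)))\<^sup>2) = Wt Qp t"
      using setupQ[OF z] by blast
    let ?q = "\<lambda>i. pc P i z"
    have A: "acoef P z w k = z ^ n * (\<Sum>r<m. TT ?q m r k * w ^ r)" if "k < m" for w k
      using acoef_eq[OF z, of k P w] that dP dz by simp
    have zz: "cnj z ^ n * z ^ n = 1" using zpow_inv[OF z, of n] by (simp add: mult.commute)
    have "(\<lambda>t. cnj (acoef P z (cis t) i) * acoef P z (cis t) j / of_real (2 * pi * (cmod (ev2 P z (cis t)))\<^sup>2))
        = (\<lambda>t. cnj (\<Sum>r<m. TT ?q m r i * cis t ^ r) * (\<Sum>r<m. TT ?q m r j * cis t ^ r) / Wt Qp t)"
    proof
      fix t
      have "cnj (acoef P z (cis t) i) * acoef P z (cis t) j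
         = (cnj z ^ n * z ^ n) * (cnj (\<Sum>r<m. TT ?q m r i * cis t ^ r) * (\<Sum>r<m. TT ?q m r j * cis t ^ r))"
        unfolding A[OF i] A[OF j] by (simp only: complex_cnj_mult complex_cnj_power mult_ac)
      then show "cnj (acoef P z (cis t) i) * acoef P z (cis t) j / of_real (2 * pi * (cmod (ev2 P z (cis t)))\<^sup>2)
        = cnj (\<Sum>r<m. TT ?q m r i * cis t ^ r) * (\<Sum>r<m. TT ?q m r j * cis t ^ r) / Wt Qp t"
        unfolding W zz by simp
    qed
    then have "integral {0..2*pi} (\<lambda>t. cnj (acoef P z (cis t) i) * acoef P z (cis t) j / of_real (2 * pi * (cmod (ev2 P z (cis t)))\<^sup>2))
        = TT ?q m i j"
      using part2_gen[OF Qq nz m1 i j] by simp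
    also have "\<dots> = Tmat P z i j" using Tmat_eq[OF z, of i P j] i j dP by simp
    finally show ?thesis .
  qed
  show ?thesis using part1 part2 by blast
qed

end
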